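(* There do not exist orthogonal quantum Latin squares $\Psi=(\psi_{ij})$ and $\Phi$ of order $6$ such that $\Psi$ is classical with underlying Latin square $L$ (i.e. there are an orthonormal basis $e_1,\dots,e_6$ of $\mathbb C^6$ and a Latin square $L=(L_{ij})$ of order $6$ on $\{1,\dots,6\}$ with $\psi_{ij}\in\mathbb C e_{L_{ij}}$ for all $i,j$) and $L$ has a subsquare of order three, i.e. there are $R,C\subseteq\{1,\dots,6\}$ with $|R|=|C|=3$ such that $\{L_{ij}: i\in R, j\in C\}$ has exactly $3$ elements.
   Context: A quantum Latin square (QLS) of order $n$ is an $n\times n$ matrix $\Psi=(\psi_{ij})_{1\le i,j\le n}$ whose entries are unit vectors in $\mathbb C^n$ such that the entries of each row and the entries of each column form an orthonormal basis of $\mathbb C^n$. Two QLS $\Psi=(\psi_{ij})$ and $\Phi=(\phi_{ij})$ of order $n$ are orthogonal if $\{\psi_{ij}\otimes\phi_{ij}: 1\le i,j\le n\}$ is an orthonormal basis of $\mathbb C^n\otimes\mathbb C^n$. A Latin square of order $n$ is an $n\times n$ array with entries from an $n$-element set in which each symbol occurs exactly once in each row and each column. *)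

theory Defs
  imports Complex_Main "HOL-Library.Numeral_Type"
begin

text \<open>Vectors in C^n are modelled as functions from a finite index type 'd
(with CARD('d) = n) to complex numbers.\<close>

definition cinner :: "('d::finite \<Rightarrow> complex) \<Rightarrow> ('d \<Rightarrow> complex) \<Rightarrow> complex" where
  "cinner v w = (\<Sum>k\<in>UNIV. cnj (v k) * w k)"

definition is_onb :: "'i set \<Rightarrow> ('i \<Rightarrow> 'd::finite \<Rightarrow> complex) \<Rightarrow> bool" where
  "is_onb I b \<longleftrightarrow> finite I \<and>
     (\<forall>i\<in>I. \<forall>j\<in>I. cinner (b i) (b j) = (if i = j then 1 else 0)) \<and>
     (\<forall>v. \<exists>c. v = (\<lambda>k. \<Sum>i\<in>I. c i * b i k))"

definition tensor :: "('d \<Rightarrow> complex) \<Rightarrow> ('e \<Rightarrow> complex) \<Rightarrow> ('d \<times> 'e \<Rightarrow> complex)" where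
  "tensor v w = (\<lambda>(k, l). v k * w l)"

text \<open>A quantum Latin square of order n = CARD('n): rows, columns and vector
coordinates are all indexed by the finite type 'n.\<close>
definition is_QLS :: "('n::finite \<Rightarrow> 'n \<Rightarrow> 'n \<Rightarrow> complex) \<Rightarrow> bool" where
  "is_QLS Psi \<longleftrightarrow> (\<forall>i. is_onb UNIV (\<lambda>j. Psi i j)) \<and> (\<forall>j. is_onb UNIV (\<lambda>i. Psi i j))"

definition orthogonal_QLS :: "('n::finite \<Rightarrow> 'n \<Rightarrow> 'n \<Rightarrow> complex) \<Rightarrow> ('n \<Rightarrow> 'n \<Rightarrow> 'n \<Rightarrow> complex) \<Rightarrow> bool" where
  "orthogonal_QLS Psi Phi \<longleftrightarrow> is_onb UNIV (\<lambda>(i, j). tensor (Psi i j) (Phi i j))"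

definition latin_square :: "('n::finite \<Rightarrow> 'n \<Rightarrow> 'n) \<Rightarrow> bool" where
  "latin_square L \<longleftrightarrow> (\<forall>i. bij (\<lambda>j. L i j)) \<and> (\<forall>j. bij (\<lambda>i. L i j))"

definition classical_with :: "('n::finite \<Rightarrow> 'n \<Rightarrow> 'n \<Rightarrow> complex) \<Rightarrow> ('n \<Rightarrow> 'n \<Rightarrow> 'n) \<Rightarrow> bool" where
  "classical_with Psi L \<longleftrightarrow> latin_square L \<and>
     (\<exists>e. is_onb UNIV e \<and> (\<forall>i j. \<exists>c. Psi i j = (\<lambda>k. c * e (L i j) k)))"

definition has_subsquare3 :: "('n::finite \<Rightarrow> 'n \<Rightarrow> 'n) \<Rightarrow> bool" where
  "has_subsquare3 L \<longleftrightarrow> (\<exists>R C. card R = 3 \<and> card C = 3 \<and>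
      card {L i j | i j. i \<in> R \<and> j \<in> C} = 3)"

end

theory Submission
  imports Defs
begin

lemma cinner_cnj: "cnj (cinner v w) = cinner w v"
  unfolding cinner_def by (simp add: mult.commute)

lemma cinner_scale_left: "cinner (\<lambda>k. a * v k) w = cnj a * cinner v w"
  unfolding cinner_def by (simp add: sum_distrib_left mult.assoc)

lemma cinner_scale_right: "cinner v (\<lambda>k. a * w k) = a * cinner v w"
  unfolding cinner_def by (simp add: sum_distrib_left algebra_simps)

lemma cinner_add_left: "cinner (\<lambda>k. u k + v k) w = cinner u w + cinner v w"
  unfolding cinner_def by (simp add: sum.distrib algebra_simps)

lemma cinner_minus_left: "cinner (\<lambda>k. - v k) w = - cinner v w"
  unfolding cinner_def by (simp add: sum_negf)

lemma cinner_self_zero: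
  fixes v :: "'d::finite \<Rightarrow> complex"
  assumes "cinner v v = 0" shows "v = (\<lambda>k. 0)"
proof -
  have "cinner v v = (\<Sum>k\<in>UNIV. complex_of_real ((cmod (v k))\<^sup>2))"
    unfolding cinner_def by (intro sum.cong refl) (simp add: complex_norm_square[symmetric] mult.commute del: of_real_power)
  hence "(\<Sum>k\<in>UNIV. (cmod (v k))\<^sup>2) = 0" using assms
    by (metis of_real_eq_0_iff of_real_sum)
  hence "\<forall>k\<in>UNIV. (cmod (v k))\<^sup>2 = 0"
    by (subst sum_nonneg_eq_0_iff[symmetric]) auto
  thus ?thesis by auto
qed

lemma onb_parseval:
  assumes "is_onb I b"
  shows "cinner u v = (\<Sum>i\<in>I. cinner u (b i) * cinner (b i) v)"
proof -
  from assms have fin: "finite I" and orth: "\<forall>i\<in>I. \<forall>j\<in>I. cinner (b i) (b j) = (if i = j then 1 else 0)"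
    and sp: "\<forall>v. \<exists>c. v = (\<lambda>k. \<Sum>i\<in>I. c i * b i k)" unfolding is_onb_def by auto
  obtain c where c: "v = (\<lambda>k. \<Sum>i\<in>I. c i * b i k)" using sp by blast
  have cv: "cinner (b j) v = c j" if "j \<in> I" for j
  proof -
    have "cinner (b j) v = (\<Sum>i\<in>I. c i * cinner (b j) (b i))"
      unfolding c cinner_def by (simp add: sum_distrib_left sum.swap[of _ UNIV] algebra_simps)
    also have "\<dots> = (\<Sum>i\<in>I. if i = j then c i else 0)"
      using orth that by (intro sum.cong) auto
    also have "\<dots> = c j" using fin that by simp
    finally show ?thesis .
  qed
  have "cinner u v = (\<Sum>i\<in>I. c i * cinner u (b i))"
    unfolding c cinner_def by (simp add: sum_distrib_left sum.swap[of _ UNIV] algebra_simps)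
  also have "\<dots> = (\<Sum>i\<in>I. cinner u (b i) * cinner (b i) v)"
    using cv by (intro sum.cong) auto
  finally show ?thesis .
qed

definition d3 :: "complex \<Rightarrow> complex \<Rightarrow> complex \<Rightarrow> complex \<Rightarrow> complex \<Rightarrow> complex \<Rightarrow> complex \<Rightarrow> complex \<Rightarrow> complex \<Rightarrow> complex" where
  "d3 a b c d e f g h i = a*(e*i - f*h) - b*(d*i - f*g) + c*(d*h - e*g)"

lemma cramer3:
  assumes "a*x+b*y+c*z = 0" "d*x+e*y+f*z = 0" "g*x+h*y+i*z = 0"
  shows "d3 a b c d e f g h i = 0 \<or> (x = 0 \<and> y = 0 \<and> z = 0)"
proof -
  have "d3 a b c d e f g h i * x = (e*i - f*h)*(a*x+b*y+c*z) - (b*i-c*h)*(d*x+e*y+f*z) + (b*f-c*e)*(g*x+h*y+i*z)"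
    by (simp add: d3_def algebra_simps)
  moreover have "d3 a b c d e f g h i * y = -(d*i - f*g)*(a*x+b*y+c*z) + (a*i-c*g)*(d*x+e*y+f*z) - (a*f-c*d)*(g*x+h*y+i*z)"
    by (simp add: d3_def algebra_simps)
  moreover have "d3 a b c d e f g h i * z = (d*h - e*g)*(a*x+b*y+c*z) - (a*h-b*g)*(d*x+e*y+f*z) + (a*e-b*d)*(g*x+h*y+i*z)"
    by (simp add: d3_def algebra_simps)
  ultimately show ?thesis using assms by auto
qed

lemma d3_sum12:
  "d3 (X 0 0) (X 0 1) (-X 0 2) (X 2 0) (4*X 2 1) (2*X 2 2) (X 1 0) (-2*X 1 1) (-4*X 1 2) +
   d3 (X 1 0) (X 1 1) (-X 1 2) (X 0 0) (4*X 0 1) (2*X 0 2) (X 2 0) (-2*X 2 1) (-4*X 2 2) +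
   d3 (X 2 0) (X 2 1) (-X 2 2) (X 1 0) (4*X 1 1) (2*X 1 2) (X 0 0) (-2*X 0 1) (-4*X 0 2)
   = 12 * d3 (X 0 0) (X 0 1) (X 0 2) (X 1 0) (X 1 1) (X 1 2) (X 2 0) (X 2 1) (X 2 2)"
  by (simp add: d3_def algebra_simps)

lemma d3_mult:
  "d3 (a0*b0+a1*b3+a2*b6) (a0*b1+a1*b4+a2*b7) (a0*b2+a1*b5+a2*b8)
      (a3*b0+a4*b3+a5*b6) (a3*b1+a4*b4+a5*b7) (a3*b2+a4*b5+a5*b8)
      (a6*b0+a7*b3+a8*b6) (a6*b1+a7*b4+a8*b7) (a6*b2+a7*b5+a8*b8)
   = d3 a0 a1 a2 a3 a4 a5 a6 a7 a8 * d3 b0 b1 b2 b3 b4 b5 b6 b7 b8"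
  by (simp add: d3_def algebra_simps)

lemma scalar_core:
  fixes X :: "nat \<Rightarrow> nat \<Rightarrow> complex" and p q :: "nat \<Rightarrow> complex"
  assumes XX: "\<And>m m'. m < 3 \<Longrightarrow> m' < 3 \<Longrightarrow>
      X m 0 * cnj (X m' 0) + X m 1 * cnj (X m' 1) + X m 2 * cnj (X m' 2) = (if m = m' then 3/4 else 0)"
  and p0: "p 0 = 0"
  and e1: "cnj (X 0 1) * q 0 + cnj (X 1 1) * q 1 + cnj (X 2 1) * q 2 = p 1 / 2"
  and e2: "cnj (X 0 2) * q 0 + cnj (X 1 2) * q 1 + cnj (X 2 2) * q 2 = - p 2 / 2"
  and m: "m0 < 3" "m1 < 3" "m2 < 3"
  and q0: "q m0 = 0"
  and e3: "X m1 0 * p 0 + X m1 1 * p 1 + X m1 2 * p 2 = - q m1 / 2"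
  and e4: "X m2 0 * p 0 + X m2 1 * p 1 + X m2 2 * p 2 = q m2 / 2"
  and nz: "p 1 \<noteq> 0 \<or> p 2 \<noteq> 0 \<or> q 0 \<noteq> 0 \<or> q 1 \<noteq> 0 \<or> q 2 \<noteq> 0"
  shows "d3 (X m0 0) (X m0 1) (-X m0 2) (X m1 0) (4*X m1 1) (2*X m1 2) (X m2 0) (-2*X m2 1) (-4*X m2 2) = 0"
proof -
  define \<rho> where "\<rho> = cnj (X 0 0) * q 0 + cnj (X 1 0) * q 1 + cnj (X 2 0) * q 2"
  define \<alpha> where "\<alpha> = p 1 / 2"
  define \<beta> where "\<beta> = p 2 / 2"
  have qr: "q m = 4/3 * (X m 0 * \<rho> + X m 1 * \<alpha> - X m 2 * \<beta>)" if "m < 3" for m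
  proof -
    have "X m 0 * \<rho> + X m 1 * \<alpha> - X m 2 * \<beta> =
       (X m 0 * cnj (X 0 0) + X m 1 * cnj (X 0 1) + X m 2 * cnj (X 0 2)) * q 0 +
       (X m 0 * cnj (X 1 0) + X m 1 * cnj (X 1 1) + X m 2 * cnj (X 1 2)) * q 1 +
       (X m 0 * cnj (X 2 0) + X m 1 * cnj (X 2 1) + X m 2 * cnj (X 2 2)) * q 2"
    proof -
      have b: "\<beta> = - (cnj (X 0 2) * q 0 + cnj (X 1 2) * q 1 + cnj (X 2 2) * q 2)"
        unfolding \<beta>_def e2 by simp
      show ?thesis unfolding \<rho>_def b \<alpha>_def e1[symmetric] by (simp add: algebra_simps)
    qed
    also have "\<dots> = 3/4 * q m"
      using that XX[OF that, of 0] XX[OF that, of 1] XX[OF that, of 2]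
      by (auto simp: less_Suc_eq numeral_3_eq_3)
    finally have h: "X m 0 * \<rho> + X m 1 * \<alpha> - X m 2 * \<beta> = 3/4 * q m" .
    show ?thesis unfolding h by simp
  qed
  have E0: "X m0 0 * \<rho> + X m0 1 * \<alpha> + (- X m0 2) * \<beta> = 0"
  proof -
    have "4/3 * (X m0 0 * \<rho> + X m0 1 * \<alpha> - X m0 2 * \<beta>) = 0" using qr[OF m(1)] q0 by simp
    hence "X m0 0 * \<rho> + X m0 1 * \<alpha> - X m0 2 * \<beta> = 0" by (subst (asm) mult_eq_0_iff) simp
    thus ?thesis by simp
  qed
  have E1: "X m1 0 * \<rho> + (4 * X m1 1) * \<alpha> + (2 * X m1 2) * \<beta> = 0"
  proof -
    have "X m1 1 * (2*\<alpha>) + X m1 2 * (2*\<beta>) = - (4/3 * (X m1 0 * \<rho> + X m1 1 * \<alpha> - X m1 2 * \<beta>)) / 2"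
      using e3 qr[OF m(2)] p0 unfolding \<alpha>_def \<beta>_def by simp
    moreover have "X m1 0 * \<rho> + (4 * X m1 1) * \<alpha> + (2 * X m1 2) * \<beta> = 3/2 * ((X m1 1 * (2*\<alpha>) + X m1 2 * (2*\<beta>)) - (- (4/3 * (X m1 0 * \<rho> + X m1 1 * \<alpha> - X m1 2 * \<beta>)) / 2))"
      by (simp add: field_simps)
    ultimately show ?thesis by simp
  qed
  have E2: "X m2 0 * \<rho> + (-2 * X m2 1) * \<alpha> + (-4 * X m2 2) * \<beta> = 0"
  proof -
    have "X m2 1 * (2*\<alpha>) + X m2 2 * (2*\<beta>) = (4/3 * (X m2 0 * \<rho> + X m2 1 * \<alpha> - X m2 2 * \<beta>)) / 2"
      using e4 qr[OF m(3)] p0 unfolding \<alpha>_def \<beta>_def by simp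
    moreover have "X m2 0 * \<rho> + (-2 * X m2 1) * \<alpha> + (-4 * X m2 2) * \<beta> = -3/2 * ((X m2 1 * (2*\<alpha>) + X m2 2 * (2*\<beta>)) - (4/3 * (X m2 0 * \<rho> + X m2 1 * \<alpha> - X m2 2 * \<beta>)) / 2)"
      by (simp add: field_simps)
    ultimately show ?thesis by (metis diff_self mult_zero_right)
  qed
  from cramer3[OF E0 E1 E2] show ?thesis
  proof
    assume z: "\<rho> = 0 \<and> \<alpha> = 0 \<and> \<beta> = 0"
    hence "q 0 = 0" "q 1 = 0" "q 2 = 0" using qr[of 0] qr[of 1] qr[of 2] by auto
    moreover have "p 1 = 0" "p 2 = 0" using z unfolding \<alpha>_def \<beta>_def by auto
    ultimately show ?thesis using nz by auto
  qed
qed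

lemma sum3: "(\<Sum>k<(3::nat). h k) = h 0 + h 1 + h 2"
  by (simp add: eval_nat_numeral)

lemma sum_delta3: fixes c :: complex shows "k < 3 \<Longrightarrow> (\<Sum>k'<(3::nat). (if k' = k then c else 0) * h k') = c * h k"
proof -
  assume k: "k < 3"
  have "(\<Sum>k'<(3::nat). (if k' = k then c else 0) * h k') = (\<Sum>k'<(3::nat). if k' = k then c * h k else 0)"
    by (rule sum.cong) auto
  also have "\<dots> = c * h k" using k by (simp add: sum.delta')
  finally show ?thesis .
qed

lemma cinner_diff_neg_left: "cinner (\<lambda>x. - u x - v x) w = - cinner u w - cinner v w"
  unfolding cinner_def by (simp add: sum_negf sum_subtractf algebra_simps)

lemma vector_core:
  fixes f g a1 a2 b1 b2 d :: "nat \<Rightarrow> 'd::finite \<Rightarrow> complex"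
  assumes pars: "\<And>u v. cinner u v = (\<Sum>k<3. cinner u (f k) * cinner (f k) v) + (\<Sum>m<3. cinner u (g m) * cinner (g m) v)"
  and fa: "\<And>k k'. k<3 \<Longrightarrow> k'<3 \<Longrightarrow> cinner (f k') (a1 k) = (if k' = k then -1/2 else 0)"
  and a2: "\<And>k. k<3 \<Longrightarrow> a2 k = (\<lambda>x. - f k x - a1 k x)"
  and gb: "\<And>m m'. m<3 \<Longrightarrow> m'<3 \<Longrightarrow> cinner (g m') (b1 m) = (if m' = m then -1/2 else 0)"
  and b2: "\<And>m. m<3 \<Longrightarrow> b2 m = (\<lambda>x. - g m x - b1 m x)"
  and bb: "\<And>m m'. m<3 \<Longrightarrow> m'<3 \<Longrightarrow> cinner (b1 m) (b1 m') = (if m = m' then 1 else 0)"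
  and ab: "\<And>k m. k<3 \<Longrightarrow> m<3 \<Longrightarrow> cinner (a1 k) (b1 m) = 0"
  and dn: "\<And>j. j<3 \<Longrightarrow> d j \<noteq> (\<lambda>x. 0)"
  and d1: "\<And>j. j<3 \<Longrightarrow> cinner (f 0) (d j) = 0"
  and d2: "\<And>j. j<3 \<Longrightarrow> cinner (a1 1) (d j) = 0"
  and d3': "\<And>j. j<3 \<Longrightarrow> cinner (a2 2) (d j) = 0"
  and d4: "\<And>j. j<3 \<Longrightarrow> cinner (g j) (d j) = 0"
  and d5: "\<And>j. j<3 \<Longrightarrow> cinner (b1 ((j+2) mod 3)) (d j) = 0"
  and d6: "\<And>j. j<3 \<Longrightarrow> cinner (b2 ((j+1) mod 3)) (d j) = 0"
  shows False
proof -
  define X where "X m k = cinner (g m) (a1 k)" for m k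
  have af: "cinner (a1 k) (f k') = (if k' = k then -1/2 else 0)" if "k<3" "k'<3" for k k'
    using fa[OF that] cinner_cnj[of "f k'" "a1 k"] by (auto split: if_splits)
  have bg: "cinner (b1 m) (g m') = (if m' = m then -1/2 else 0)" if "m<3" "m'<3" for m m'
    using gb[OF that] cinner_cnj[of "g m'" "b1 m"] by (auto split: if_splits)
  have ag: "cinner (a1 k) (g m) = cnj (X m k)" for k m
    unfolding X_def by (simp add: cinner_cnj)
  have Y: "cinner (f k) (b1 m) = - cnj (X m k)" if "k<3" "m<3" for k m
  proof -
    have "0 = (\<Sum>k'<3. cinner (a1 k) (f k') * cinner (f k') (b1 m)) + (\<Sum>m'<3. cinner (a1 k) (g m') * cinner (g m') (b1 m))"
      using pars[of "a1 k" "b1 m"] ab[OF that] by simp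
    also have "(\<Sum>k'<3. cinner (a1 k) (f k') * cinner (f k') (b1 m)) = -1/2 * cinner (f k) (b1 m)"
      using af[OF that(1)] sum_delta3[OF that(1), of "-1/2" "\<lambda>k'. cinner (f k') (b1 m)"]
      by (simp add: lessThan_iff)
    also have "(\<Sum>m'<3. cinner (a1 k) (g m') * cinner (g m') (b1 m)) = (\<Sum>m'<3. (if m' = m then -1/2 else 0) * cinner (a1 k) (g m'))"
      using gb[OF that(2)] by (intro sum.cong) (auto simp: mult.commute)
    also have "\<dots> = -1/2 * cnj (X m k)"
      unfolding ag using sum_delta3[OF that(2), of "-1/2" "\<lambda>m'. cnj (X m' k)"] by simp
    finally show ?thesis by (simp add: algebra_simps)
  qed
  have XX: "X m 0 * cnj (X m' 0) + X m 1 * cnj (X m' 1) + X m 2 * cnj (X m' 2) = (if m = m' then 3/4 else 0)"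
    if "m<3" "m'<3" for m m'
  proof -
    have "cinner (b1 m) (b1 m') = (\<Sum>k<3. cinner (b1 m) (f k) * cinner (f k) (b1 m')) + (\<Sum>m''<3. cinner (b1 m) (g m'') * cinner (g m'') (b1 m'))"
      by (rule pars)
    also have "(\<Sum>k<3. cinner (b1 m) (f k) * cinner (f k) (b1 m')) = (\<Sum>k<3. X m k * cnj (X m' k))"
    proof (rule sum.cong)
      fix k assume "k \<in> {..<(3::nat)}"
      hence k: "k < 3" by simp
      have "cinner (b1 m) (f k) = cnj (cinner (f k) (b1 m))" by (simp add: cinner_cnj)
      thus "cinner (b1 m) (f k) * cinner (f k) (b1 m') = X m k * cnj (X m' k)"
        using Y[OF k that(1)] Y[OF k that(2)] by simp
    qed simp
    also have "(\<Sum>m''<3. cinner (b1 m) (g m'') * cinner (g m'') (b1 m')) = (\<Sum>m''<3. (if m'' = m then -1/2 else 0) * cinner (g m'') (b1 m'))"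
      using bg[OF that(1)] by (intro sum.cong) auto
    also have "\<dots> = -1/2 * cinner (g m) (b1 m')"
      using sum_delta3[OF that(1), of "-1/2" "\<lambda>m''. cinner (g m'') (b1 m')"] by simp
    also have "\<dots> = (if m = m' then 1/4 else 0)" using gb[OF that(2) that(1)] by simp
    finally have h: "cinner (b1 m) (b1 m') = (\<Sum>k<3. X m k * cnj (X m' k)) + (if m = m' then 1/4 else 0)" .
    hence h2: "(\<Sum>k<3. X m k * cnj (X m' k)) = (if m = m' then 1 else 0) - (if m = m' then 1/4 else 0)"
      using bb[OF that] by (simp add: eq_diff_eq)
    show ?thesis using h2 by (simp add: sum3)
  qed
  have detj: "d3 (X m0 0) (X m0 1) (-X m0 2) (X m1 0) (4*X m1 1) (2*X m1 2) (X m2 0) (-2*X m2 1) (-4*X m2 2) = 0"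
    if j: "j < 3" and mm: "m0 = j" "m1 = (j+2) mod 3" "m2 = (j+1) mod 3" for j m0 m1 m2
  proof -
    define p where "p k = cinner (f k) (d j)" for k
    define q where "q m = cinner (g m) (d j)" for m
    have ad: "cinner (a1 k) (d j) = -1/2 * p k + (cnj (X 0 k) * q 0 + cnj (X 1 k) * q 1 + cnj (X 2 k) * q 2)" if "k < 3" for k
    proof -
      have "cinner (a1 k) (d j) = (\<Sum>k'<3. cinner (a1 k) (f k') * cinner (f k') (d j)) + (\<Sum>m<3. cinner (a1 k) (g m) * cinner (g m) (d j))"
        by (rule pars)
      also have "(\<Sum>k'<3. cinner (a1 k) (f k') * cinner (f k') (d j)) = (\<Sum>k'<3. (if k' = k then -1/2 else 0) * p k')"
        using af[OF that] unfolding p_def by (intro sum.cong) auto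
      also have "\<dots> = -1/2 * p k" using sum_delta3[OF that, of "-1/2" p] by simp
      finally show ?thesis unfolding q_def ag by (simp add: sum3)
    qed
    have bd: "cinner (b1 m) (d j) = -1/2 * q m - (X m 0 * p 0 + X m 1 * p 1 + X m 2 * p 2)" if "m < 3" for m
    proof -
      have "cinner (b1 m) (d j) = (\<Sum>k<3. cinner (b1 m) (f k) * cinner (f k) (d j)) + (\<Sum>m'<3. cinner (b1 m) (g m') * cinner (g m') (d j))"
        by (rule pars)
      also have "(\<Sum>m'<3. cinner (b1 m) (g m') * cinner (g m') (d j)) = (\<Sum>m'<3. (if m' = m then -1/2 else 0) * q m')"
        using bg[OF that] unfolding q_def by (intro sum.cong) auto
      also have "\<dots> = -1/2 * q m" using sum_delta3[OF that, of "-1/2" q] by simp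
      also have "(\<Sum>k<3. cinner (b1 m) (f k) * cinner (f k) (d j)) = (\<Sum>k<3. - X m k * p k)"
      proof (rule sum.cong)
        fix k assume "k \<in> {..<(3::nat)}"
        hence k: "k < 3" by simp
        have "cinner (b1 m) (f k) = cnj (cinner (f k) (b1 m))" by (simp add: cinner_cnj)
        thus "cinner (b1 m) (f k) * cinner (f k) (d j) = - X m k * p k"
          using Y[OF k that] unfolding p_def by simp
      qed simp
      finally have h: "cinner (b1 m) (d j) = (\<Sum>k<3. - X m k * p k) + -1/2 * q m" .
      show ?thesis unfolding h sum3 by (simp add: algebra_simps)
    qed
    have p0: "p 0 = 0" using d1[OF j] unfolding p_def .
    have e1: "cnj (X 0 1) * q 0 + cnj (X 1 1) * q 1 + cnj (X 2 1) * q 2 = p 1 / 2"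
      using ad[of 1] d2[OF j] by (simp add: algebra_simps)
    have e2: "cnj (X 0 2) * q 0 + cnj (X 1 2) * q 1 + cnj (X 2 2) * q 2 = - p 2 / 2"
    proof -
      have "cinner (a2 2) (d j) = - p 2 - cinner (a1 2) (d j)"
        unfolding a2[of 2, simplified] cinner_diff_neg_left p_def by simp
      thus ?thesis using ad[of 2] d3'[OF j] by (simp add: algebra_simps)
    qed
    have mlt: "m0 < 3" "m1 < 3" "m2 < 3" using mm j by auto
    have q0: "q m0 = 0" using d4[OF j] mm unfolding q_def by simp
    have e3: "X m1 0 * p 0 + X m1 1 * p 1 + X m1 2 * p 2 = - q m1 / 2"
      using bd[OF mlt(2)] d5[OF j] mm by (simp add: algebra_simps)
    have e4: "X m2 0 * p 0 + X m2 1 * p 1 + X m2 2 * p 2 = q m2 / 2"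
    proof -
      have "cinner (b2 m2) (d j) = - q m2 - cinner (b1 m2) (d j)"
        unfolding b2[OF mlt(3)] cinner_diff_neg_left q_def by simp
      thus ?thesis using bd[OF mlt(3)] d6[OF j] mm by (simp add: algebra_simps)
    qed
    have nz: "p 1 \<noteq> 0 \<or> p 2 \<noteq> 0 \<or> q 0 \<noteq> 0 \<or> q 1 \<noteq> 0 \<or> q 2 \<noteq> 0"
    proof (rule ccontr)
      assume "\<not> ?thesis"
      hence z: "p 1 = 0" "p 2 = 0" "q 0 = 0" "q 1 = 0" "q 2 = 0" by auto
      have "cinner (d j) (d j) = (\<Sum>k<3. cinner (d j) (f k) * p k) + (\<Sum>m<3. cinner (d j) (g m) * q m)"
        unfolding p_def q_def by (rule pars)
      also have "\<dots> = 0" using z p0 by (simp add: sum3)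
      finally have "d j = (\<lambda>x. 0)" by (rule cinner_self_zero)
      thus False using dn[OF j] by simp
    qed
    show ?thesis
      by (rule scalar_core[OF XX p0 e1 e2 mlt q0 e3 e4 nz])
  qed
  have "12 * d3 (X 0 0) (X 0 1) (X 0 2) (X 1 0) (X 1 1) (X 1 2) (X 2 0) (X 2 1) (X 2 2) = 0"
    unfolding d3_sum12[symmetric]
    using detj[of 0 0 2 1] detj[of 1 1 0 2] detj[of 2 2 1 0] by simp
  hence dz: "d3 (X 0 0) (X 0 1) (X 0 2) (X 1 0) (X 1 1) (X 1 2) (X 2 0) (X 2 1) (X 2 2) = 0" by simp
  have "d3 (3/4) 0 0 0 (3/4) 0 0 0 (3/4) = 
     d3 (X 0 0) (X 0 1) (X 0 2) (X 1 0) (X 1 1) (X 1 2) (X 2 0) (X 2 1) (X 2 2) *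
     d3 (cnj (X 0 0)) (cnj (X 1 0)) (cnj (X 2 0)) (cnj (X 0 1)) (cnj (X 1 1)) (cnj (X 2 1)) (cnj (X 0 2)) (cnj (X 1 2)) (cnj (X 2 2))"
    unfolding d3_mult[symmetric] using XX by simp
  also have "\<dots> = 0" using dz by simp
  finally show False by (simp add: d3_def)
qed

lemma cinner_lin3_right:
  "cinner u (\<lambda>k. x0 k + z1 * x1 k + z2 * x2 k) = cinner u x0 + z1 * cinner u x1 + z2 * cinner u x2"
  unfolding cinner_def by (simp add: sum.distrib sum_distrib_left algebra_simps)

lemma cinner_lin3_left:
  "cinner (\<lambda>k. x0 k + z1 * x1 k + z2 * x2 k) u = cinner x0 u + cnj z1 * cinner x1 u + cnj z2 * cinner x2 u"
  unfolding cinner_def by (simp add: sum.distrib sum_distrib_left algebra_simps)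

lemma trine:
  fixes x0 x1 x2 :: "'d::finite \<Rightarrow> complex"
  assumes n0: "cinner x0 x0 = 1" and n1: "cinner x1 x1 = 1" and n2: "cinner x2 x2 = 1"
  and F: "\<And>u v. u \<in> {x0,x1,x2} \<Longrightarrow> v \<in> {x0,x1,x2} \<Longrightarrow>
     cinner u x0 * cinner x0 v + cinner u x1 * cinner x1 v + cinner u x2 * cinner x2 v = 3/2 * cinner u v"
  shows "cnj (-2 * cinner x1 x0) * (-2 * cinner x1 x0) = 1"
    and "cnj (-2 * cinner x2 x0) * (-2 * cinner x2 x0) = 1"
    and "(\<lambda>k. x0 k + (-2 * cinner x1 x0) * x1 k + (-2 * cinner x2 x0) * x2 k) = (\<lambda>k. 0)"
    and "cinner x0 (\<lambda>k. (-2 * cinner x1 x0) * x1 k) = -1/2"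
proof -
  define a where "a = cinner x0 x1 * cinner x1 x0"
  define b where "b = cinner x0 x2 * cinner x2 x0"
  define c where "c = cinner x1 x2 * cinner x2 x1"
  have ab: "a + b = 1/2"
  proof -
    have "1 + a + b = 3/2" using F[of x0 x0] n0 unfolding a_def b_def by simp
    thus ?thesis by (simp add: algebra_simps)
  qed
  have ac: "a + c = 1/2"
  proof -
    have "a + 1 + c = 3/2" using F[of x1 x1] n1 unfolding a_def c_def by (simp add: mult.commute)
    thus ?thesis by (simp add: algebra_simps)
  qed
  have bc: "b + c = 1/2"
  proof -
    have "b + c + 1 = 3/2" using F[of x2 x2] n2 unfolding b_def c_def by (simp add: mult.commute)
    thus ?thesis by (simp add: algebra_simps)
  qed
  have a4: "a = 1/4"
  proof -
    have "2 * a = (a + b) + (a + c) - (b + c)" by (simp add: algebra_simps)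
    also have "\<dots> = 1/2" by (simp only: ab ac bc) simp
    finally show ?thesis by (simp add: mult.commute)
  qed
  have b4: "b = 1/4"
  proof -
    have "b = (a + b) - a" by simp
    also have "\<dots> = 1/4" by (subst ab) (simp add: a4)
    finally show ?thesis .
  qed
  have r10: "cinner x1 x2 * cinner x2 x0 = -1/2 * cinner x1 x0"
  proof -
    have "cinner x1 x0 * 1 + 1 * cinner x1 x0 + cinner x1 x2 * cinner x2 x0 = 3/2 * cinner x1 x0"
      using F[of x1 x0] n0 n1 by simp
    thus ?thesis by algebra
  qed
  have r20: "cinner x2 x1 * cinner x1 x0 = -1/2 * cinner x2 x0"
  proof -
    have "cinner x2 x0 * 1 + cinner x2 x1 * cinner x1 x0 + 1 * cinner x2 x0 = 3/2 * cinner x2 x0"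
      using F[of x2 x0] n0 n2 by simp
    thus ?thesis by algebra
  qed
  have c10: "cnj (cinner x1 x0) = cinner x0 x1" by (simp add: cinner_cnj)
  have c20: "cnj (cinner x2 x0) = cinner x0 x2" by (simp add: cinner_cnj)
  show "cnj (-2 * cinner x1 x0) * (-2 * cinner x1 x0) = 1"
    using a4 c10 unfolding a_def by (simp add: mult_ac)
  show "cnj (-2 * cinner x2 x0) * (-2 * cinner x2 x0) = 1"
    using b4 c20 unfolding b_def by (simp add: mult_ac)
  show "cinner x0 (\<lambda>k. (-2 * cinner x1 x0) * x1 k) = -1/2"
    unfolding cinner_scale_right using a4 unfolding a_def by (simp add: mult.commute)
  define v where "v = (\<lambda>k. x0 k + (-2 * cinner x1 x0) * x1 k + (-2 * cinner x2 x0) * x2 k)"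
  have v0: "cinner x0 v = 0"
  proof -
    have "cinner x0 v = 1 - 2 * a - 2 * b" unfolding v_def cinner_lin3_right a_def b_def using n0
      by (simp add: algebra_simps)
    thus ?thesis using a4 b4 by simp
  qed
  have v1: "cinner x1 v = 0"
  proof -
    have "cinner x1 v = - cinner x1 x0 - 2 * (cinner x1 x2 * cinner x2 x0)" unfolding v_def cinner_lin3_right using n1
      by (simp add: algebra_simps)
    thus ?thesis using r10 by simp
  qed
  have v2: "cinner x2 v = 0"
  proof -
    have "cinner x2 v = - cinner x2 x0 - 2 * (cinner x2 x1 * cinner x1 x0)" unfolding v_def cinner_lin3_right using n2
      by (simp add: algebra_simps)
    thus ?thesis using r20 by simp
  qed
  have "cinner v v = 0"
    using v0 v1 v2 unfolding v_def[of] cinner_lin3_left by (simp add: v_def[symmetric])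
  thus "(\<lambda>k. x0 k + (-2 * cinner x1 x0) * x1 k + (-2 * cinner x2 x0) * x2 k) = (\<lambda>k. 0)"
    unfolding v_def[symmetric] by (rule cinner_self_zero)
qed

lemma sum_pairs: "(\<Sum>p\<in>(UNIV::('a::finite \<times> 'b::finite) set). h p) = (\<Sum>i\<in>UNIV. \<Sum>j\<in>UNIV. h (i, j))"
  by (simp add: UNIV_Times_UNIV[symmetric] sum.cartesian_product del: UNIV_Times_UNIV)

lemma cinner_tensor: "cinner (tensor a b) (tensor c d) = cinner a c * cinner b d"
proof -
  have "cinner (tensor a b) (tensor c d) = (\<Sum>i\<in>UNIV. \<Sum>j\<in>UNIV. (cnj (a i) * c i) * (cnj (b j) * d j))"
    unfolding cinner_def sum_pairs by (simp add: tensor_def algebra_simps)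
  also have "\<dots> = cinner a c * cinner b d" unfolding cinner_def by (simp add: sum_product)
  finally show ?thesis .
qed

locale qsetting =
  fixes Psi Phi :: "6 \<Rightarrow> 6 \<Rightarrow> 6 \<Rightarrow> complex" and L :: "6 \<Rightarrow> 6 \<Rightarrow> 6"
    and e :: "6 \<Rightarrow> 6 \<Rightarrow> complex" and cc :: "6 \<Rightarrow> 6 \<Rightarrow> complex"
  assumes qP: "is_QLS Psi" and qF: "is_QLS Phi" and orth: "orthogonal_QLS Psi Phi"
    and lat: "latin_square L" and eonb: "is_onb UNIV e"
    and psi: "\<And>i j. Psi i j = (\<lambda>k. cc i j * e (L i j) k)"
begin

lemma row_onb: "is_onb UNIV (\<lambda>j. Phi i j)" using qF unfolding is_QLS_def by auto
lemma col_onb: "is_onb UNIV (\<lambda>i. Phi i j)" using qF unfolding is_QLS_def by auto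

lemma unit: "cinner (Phi i j) (Phi i j) = 1"
  using row_onb[of i] unfolding is_onb_def by auto

lemma row_orth: "j \<noteq> j' \<Longrightarrow> cinner (Phi i j) (Phi i j') = 0"
  using row_onb[of i] unfolding is_onb_def by auto

lemma col_orth: "i \<noteq> i' \<Longrightarrow> cinner (Phi i j) (Phi i' j) = 0"
  using col_onb[of j] unfolding is_onb_def by auto

lemma row_pars: "cinner u v = (\<Sum>j\<in>UNIV. cinner u (Phi i j) * cinner (Phi i j) v)"
  using onb_parseval[OF row_onb[of i]] .

lemma col_pars: "cinner u v = (\<Sum>i\<in>UNIV. cinner u (Phi i j) * cinner (Phi i j) v)"
  using onb_parseval[OF col_onb[of j]] .

lemma e_orth: "cinner (e s) (e t) = (if s = t then 1 else 0)"
  using eonb unfolding is_onb_def by auto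

lemma cc_unit: "cnj (cc i j) * cc i j = 1"
proof -
  have "cinner (Psi i j) (Psi i j) = 1" using qP unfolding is_QLS_def is_onb_def by auto
  thus ?thesis unfolding psi cinner_scale_left cinner_scale_right e_orth by simp
qed

definition T where "T = (\<lambda>(i, j). tensor (Psi i j) (Phi i j))"

lemma T_onb: "is_onb UNIV T" using orth unfolding orthogonal_QLS_def T_def .

lemma sym_orth:
  assumes "(i, j) \<noteq> (i', j')" "L i j = L i' j'"
  shows "cinner (Phi i j) (Phi i' j') = 0"
proof -
  have "cinner (T (i, j)) (T (i', j')) = 0" using T_onb assms(1) unfolding is_onb_def by auto
  hence "cinner (Psi i j) (Psi i' j') * cinner (Phi i j) (Phi i' j') = 0"
    unfolding T_def by (simp add: cinner_tensor)
  moreover have "cinner (Psi i j) (Psi i' j') = cnj (cc i j) * cc i' j'"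
    unfolding psi cinner_scale_left cinner_scale_right e_orth using assms(2) by simp
  moreover have "cnj (cc i j) * cc i' j' \<noteq> 0"
    using cc_unit[of i j] cc_unit[of i' j'] by auto
  ultimately show ?thesis by simp
qed

lemma sym_pars:
  "cinner u v = (\<Sum>i\<in>UNIV. \<Sum>j\<in>UNIV. if L i j = s then cinner u (Phi i j) * cinner (Phi i j) v else 0)"
proof -
  have "cinner (tensor (e s) u) (tensor (e s) v) = (\<Sum>p\<in>UNIV. cinner (tensor (e s) u) (T p) * cinner (T p) (tensor (e s) v))"
    by (rule onb_parseval[OF T_onb])
  also have "\<dots> = (\<Sum>i\<in>UNIV. \<Sum>j\<in>UNIV. cinner (tensor (e s) u) (T (i,j)) * cinner (T (i,j)) (tensor (e s) v))"
    by (rule sum_pairs)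
  also have "\<dots> = (\<Sum>i\<in>UNIV. \<Sum>j\<in>UNIV. if L i j = s then cinner u (Phi i j) * cinner (Phi i j) v else 0)"
  proof (intro sum.cong refl)
    fix i j
    have "cinner (tensor (e s) u) (T (i,j)) * cinner (T (i,j)) (tensor (e s) v) =
       (cnj (cc i j) * cc i j) * (cinner (e s) (e (L i j)) * cinner (e (L i j)) (e s)) * (cinner u (Phi i j) * cinner (Phi i j) v)"
      unfolding T_def by (simp add: cinner_tensor psi cinner_scale_left cinner_scale_right algebra_simps)
    thus "cinner (tensor (e s) u) (T (i,j)) * cinner (T (i,j)) (tensor (e s) v) =
       (if L i j = s then cinner u (Phi i j) * cinner (Phi i j) v else 0)"
      unfolding cc_unit e_orth by auto
  qed
  finally show ?thesis by (simp add: cinner_tensor e_orth)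
qed

end

lemma card_compl6: "card (- (X :: 6 set)) = 6 - card X"
  by (simp add: Compl_eq_Diff_UNIV card_Diff_subset)

locale sqsetting = qsetting +
  fixes R C :: "6 set"
  assumes cR: "card R = 3" and cC: "card C = 3" and cS: "card {L i j | i j. i \<in> R \<and> j \<in> C} = 3"
begin

definition S where "S = {L i j | i j. i \<in> R \<and> j \<in> C}"

lemma cS': "card S = 3" using cS unfolding S_def .
lemma cnS: "card (- S) = 3" using cS' card_compl6[of S] by simp
lemma cnC: "card (- C) = 3" using cC card_compl6[of C] by simp
lemma cnR: "card (- R) = 3" using cR card_compl6[of R] by simp

lemma inj_row: "L i j = L i j' \<Longrightarrow> j = j'"
  using lat unfolding latin_square_def bij_def inj_def by blast
lemma inj_col: "L i j = L i' j \<Longrightarrow> i = i'"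
  using lat unfolding latin_square_def bij_def inj_def by blast
lemma surj_col: "\<exists>i. L i j = s"
  using lat unfolding latin_square_def bij_def surj_def by metis

lemma L_RC: "i \<in> R \<Longrightarrow> j \<in> C \<Longrightarrow> L i j \<in> S" unfolding S_def by blast

lemma row_image: assumes "i \<in> R" shows "(\<lambda>j. L i j) ` C = S"
proof (rule card_subset_eq)
  show "finite S" by simp
  show "(\<lambda>j. L i j) ` C \<subseteq> S" using L_RC assms by auto
  have "inj_on (\<lambda>j. L i j) C" using inj_row by (auto simp: inj_on_def)
  thus "card ((\<lambda>j. L i j) ` C) = card S" using cC cS' by (simp add: card_image)
qed

lemma col_image: assumes "j \<in> C" shows "(\<lambda>i. L i j) ` R = S"
proof (rule card_subset_eq)
  show "finite S" by simp
  show "(\<lambda>i. L i j) ` R \<subseteq> S" using L_RC assms by auto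
  have "inj_on (\<lambda>i. L i j) R" using inj_col by (auto simp: inj_on_def)
  thus "card ((\<lambda>i. L i j) ` R) = card S" using cR cS' by (simp add: card_image)
qed

lemma L_RnC: assumes "i \<in> R" "j \<notin> C" shows "L i j \<notin> S"
proof
  assume "L i j \<in> S"
  then obtain j' where "j' \<in> C" "L i j = L i j'" using row_image[OF assms(1)] by force
  thus False using inj_row assms(2) by blast
qed

lemma L_nRC: assumes "i \<notin> R" "j \<in> C" shows "L i j \<notin> S"
proof
  assume "L i j \<in> S"
  then obtain i' where "i' \<in> R" "L i j = L i' j" using col_image[OF assms(2)] by force
  thus False using inj_col assms(1) by blast
qed

lemma row_image_nC: assumes "i \<in> R" shows "(\<lambda>j. L i j) ` (- C) = - S"
proof (rule card_subset_eq)
  show "finite (- S)" by simp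
  show "(\<lambda>j. L i j) ` (- C) \<subseteq> - S" using L_RnC assms by auto
  have "inj_on (\<lambda>j. L i j) (- C)" using inj_row by (auto simp: inj_on_def)
  thus "card ((\<lambda>j. L i j) ` (- C)) = card (- S)" using cnC cnS by (simp add: card_image)
qed

lemma col_image_nC: assumes "j \<notin> C" shows "(\<lambda>i. L i j) ` R = - S"
proof (rule card_subset_eq)
  show "finite (- S)" by simp
  show "(\<lambda>i. L i j) ` R \<subseteq> - S" using L_RnC assms by auto
  have "inj_on (\<lambda>i. L i j) R" using inj_col by (auto simp: inj_on_def)
  thus "card ((\<lambda>i. L i j) ` R) = card (- S)" using cR cnS by (simp add: card_image)
qed

lemma L_nRnC: assumes "i \<notin> R" "j \<notin> C" shows "L i j \<in> S"
proof (rule ccontr)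
  assume "L i j \<notin> S"
  then obtain i' where "i' \<in> R" "L i j = L i' j" using col_image_nC[OF assms(2)] by force
  thus False using inj_col assms(1) by blast
qed

lemma notS_iff: "L i j \<notin> S \<longleftrightarrow> (i \<in> R \<and> j \<notin> C) \<or> (i \<notin> R \<and> j \<in> C)"
  using L_RC L_RnC L_nRC L_nRnC by blast

lemma split_sum: "(\<Sum>x\<in>(UNIV::6 set). h x) = (\<Sum>x\<in>X. h x) + (\<Sum>x\<in>-X. h x)"
proof -
  have "(\<Sum>x\<in>(UNIV::6 set). h x) = (\<Sum>x\<in>X \<union> -X. h x)" by simp
  also have "\<dots> = (\<Sum>x\<in>X. h x) + (\<Sum>x\<in>-X. h x)" by (rule sum.union_disjoint) auto
  finally show ?thesis .
qed

lemma frames: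
  fixes u v
  defines "TT \<equiv> \<lambda>i j. cinner u (Phi i j) * cinner (Phi i j) v"
  shows "(\<Sum>i\<in>R. \<Sum>j\<in>C. TT i j) = 3/2 * cinner u v"
    and "(\<Sum>i\<in>R. \<Sum>j\<in>-C. TT i j) = 3/2 * cinner u v"
proof -
  define A where "A = (\<Sum>i\<in>R. \<Sum>j\<in>C. TT i j)"
  define B where "B = (\<Sum>i\<in>R. \<Sum>j\<in>-C. TT i j)"
  define Cb where "Cb = (\<Sum>i\<in>-R. \<Sum>j\<in>C. TT i j)"
  have rows: "A + B = 3 * cinner u v"
  proof -
    have "A + B = (\<Sum>i\<in>R. \<Sum>j\<in>UNIV. TT i j)"
      unfolding A_def B_def sum.distrib[symmetric] by (intro sum.cong refl) (rule split_sum[symmetric])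
    also have "\<dots> = (\<Sum>i\<in>R. cinner u v)" unfolding TT_def using row_pars by simp
    also have "\<dots> = 3 * cinner u v" using cR by simp
    finally show ?thesis .
  qed
  have cols: "A + Cb = 3 * cinner u v"
  proof -
    have "A + Cb = (\<Sum>i\<in>UNIV. \<Sum>j\<in>C. TT i j)"
      unfolding A_def Cb_def by (rule split_sum[symmetric])
    also have "\<dots> = (\<Sum>j\<in>C. \<Sum>i\<in>UNIV. TT i j)" by (rule sum.swap)
    also have "\<dots> = (\<Sum>j\<in>C. cinner u v)" unfolding TT_def using col_pars by simp
    also have "\<dots> = 3 * cinner u v" using cC by simp
    finally show ?thesis .
  qed
  have syms: "B + Cb = 3 * cinner u v"
  proof -
    have "3 * cinner u v = (\<Sum>s\<in>-S. cinner u v)" using cnS by simp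
    also have "\<dots> = (\<Sum>s\<in>-S. \<Sum>i\<in>UNIV. \<Sum>j\<in>UNIV. if L i j = s then TT i j else 0)"
      unfolding TT_def by (intro sum.cong refl) (rule sym_pars)
    also have "\<dots> = (\<Sum>i\<in>UNIV. \<Sum>s\<in>-S. \<Sum>j\<in>UNIV. if L i j = s then TT i j else 0)"
      by (rule sum.swap)
    also have "\<dots> = (\<Sum>i\<in>UNIV. \<Sum>j\<in>UNIV. \<Sum>s\<in>-S. if L i j = s then TT i j else 0)"
      by (rule sum.cong[OF refl]) (rule sum.swap)
    also have "\<dots> = (\<Sum>i\<in>UNIV. \<Sum>j\<in>UNIV. if L i j \<notin> S then TT i j else 0)"
      by (intro sum.cong refl) (simp add: sum.delta')
    also have "\<dots> = B + Cb"
    proof -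
      have "(\<Sum>i\<in>UNIV. \<Sum>j\<in>UNIV. if L i j \<notin> S then TT i j else 0) =
          (\<Sum>i\<in>R. \<Sum>j\<in>UNIV. if L i j \<notin> S then TT i j else 0) + (\<Sum>i\<in>-R. \<Sum>j\<in>UNIV. if L i j \<notin> S then TT i j else 0)"
        by (rule split_sum)
      also have "(\<Sum>i\<in>R. \<Sum>j\<in>UNIV. if L i j \<notin> S then TT i j else 0) = B"
        unfolding B_def
      proof (rule sum.cong[OF refl])
        fix i assume i: "i \<in> R"
        have "(\<Sum>j\<in>UNIV. if L i j \<notin> S then TT i j else 0) = (\<Sum>j\<in>C. if L i j \<notin> S then TT i j else 0) + (\<Sum>j\<in>-C. if L i j \<notin> S then TT i j else 0)"
          by (rule split_sum)
        also have "\<dots> = 0 + (\<Sum>j\<in>-C. TT i j)"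
          using i notS_iff by (intro arg_cong2[where f="(+)"] sum.neutral sum.cong) auto
        finally show "(\<Sum>j\<in>UNIV. if L i j \<notin> S then TT i j else 0) = (\<Sum>j\<in>-C. TT i j)" by simp
      qed
      also have "(\<Sum>i\<in>-R. \<Sum>j\<in>UNIV. if L i j \<notin> S then TT i j else 0) = Cb"
        unfolding Cb_def
      proof (rule sum.cong[OF refl])
        fix i assume i: "i \<in> -R"
        have "(\<Sum>j\<in>UNIV. if L i j \<notin> S then TT i j else 0) = (\<Sum>j\<in>C. if L i j \<notin> S then TT i j else 0) + (\<Sum>j\<in>-C. if L i j \<notin> S then TT i j else 0)"
          by (rule split_sum)
        also have "\<dots> = (\<Sum>j\<in>C. TT i j) + 0"
          using i notS_iff by (intro arg_cong2[where f="(+)"] sum.neutral sum.cong) auto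
        finally show "(\<Sum>j\<in>UNIV. if L i j \<notin> S then TT i j else 0) = (\<Sum>j\<in>C. TT i j)" by simp
      qed
      finally show ?thesis .
    qed
    finally show ?thesis by simp
  qed
  have "A = 3/2 * cinner u v" using rows cols syms by algebra
  thus "(\<Sum>i\<in>R. \<Sum>j\<in>C. TT i j) = 3/2 * cinner u v" unfolding A_def .
  have "B = 3/2 * cinner u v" using rows cols syms by algebra
  thus "(\<Sum>i\<in>R. \<Sum>j\<in>-C. TT i j) = 3/2 * cinner u v" unfolding B_def .
qed

end

lemma less3: "(i::nat) < 3 \<longleftrightarrow> i = 0 \<or> i = 1 \<or> i = 2" by auto

lemma latin3:
  fixes M :: "nat \<Rightarrow> nat \<Rightarrow> 'a"
  assumes inS: "\<And>i j. i<3 \<Longrightarrow> j<3 \<Longrightarrow> M i j \<in> {M 0 0, M 0 1, M 0 2}"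
  and rowinj: "\<And>i j j'. i<3 \<Longrightarrow> j<3 \<Longrightarrow> j'<3 \<Longrightarrow> M i j = M i j' \<Longrightarrow> j = j'"
  and colinj: "\<And>i i' j. i<3 \<Longrightarrow> i'<3 \<Longrightarrow> j<3 \<Longrightarrow> M i j = M i' j \<Longrightarrow> i = i'"
  shows "(\<forall>i<3. \<forall>j<3. M i j = M 0 ((i+j) mod 3)) \<or> (\<forall>i<3. \<forall>j<3. M i j = M 0 ((j + 2*i) mod 3))"
proof -
  have "M 0 0 \<noteq> M 0 1" using rowinj[of 0 0 1] by auto
  moreover have "M 0 0 \<noteq> M 0 2" using rowinj[of 0 0 2] by auto
  moreover have "M 0 1 \<noteq> M 0 2" using rowinj[of 0 1 2] by auto
  moreover have "M 1 0 \<noteq> M 1 1" using rowinj[of 1 0 1] by auto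
  moreover have "M 1 0 \<noteq> M 1 2" using rowinj[of 1 0 2] by auto
  moreover have "M 1 1 \<noteq> M 1 2" using rowinj[of 1 1 2] by auto
  moreover have "M 2 0 \<noteq> M 2 1" using rowinj[of 2 0 1] by auto
  moreover have "M 2 0 \<noteq> M 2 2" using rowinj[of 2 0 2] by auto
  moreover have "M 2 1 \<noteq> M 2 2" using rowinj[of 2 1 2] by auto
  moreover have "M 0 0 \<noteq> M 1 0" using colinj[of 0 1 0] by auto
  moreover have "M 0 0 \<noteq> M 2 0" using colinj[of 0 2 0] by auto
  moreover have "M 1 0 \<noteq> M 2 0" using colinj[of 1 2 0] by auto
  moreover have "M 0 1 \<noteq> M 1 1" using colinj[of 0 1 1] by auto
  moreover have "M 0 1 \<noteq> M 2 1" using colinj[of 0 2 1] by auto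
  moreover have "M 1 1 \<noteq> M 2 1" using colinj[of 1 2 1] by auto
  moreover have "M 0 2 \<noteq> M 1 2" using colinj[of 0 1 2] by auto
  moreover have "M 0 2 \<noteq> M 2 2" using colinj[of 0 2 2] by auto
  moreover have "M 1 2 \<noteq> M 2 2" using colinj[of 1 2 2] by auto
  ultimately have neq: "M 0 0 \<noteq> M 0 1 \<and> M 0 0 \<noteq> M 0 2 \<and> M 0 1 \<noteq> M 0 2 \<and> M 1 0 \<noteq> M 1 1 \<and> M 1 0 \<noteq> M 1 2 \<and> M 1 1 \<noteq> M 1 2 \<and> M 2 0 \<noteq> M 2 1 \<and> M 2 0 \<noteq> M 2 2 \<and> M 2 1 \<noteq> M 2 2 \<and> M 0 0 \<noteq> M 1 0 \<and> M 0 0 \<noteq> M 2 0 \<and> M 1 0 \<noteq> M 2 0 \<and> M 0 1 \<noteq> M 1 1 \<and> M 0 1 \<noteq> M 2 1 \<and> M 1 1 \<noteq> M 2 1 \<and> M 0 2 \<noteq> M 1 2 \<and> M 0 2 \<noteq> M 2 2 \<and> M 1 2 \<noteq> M 2 2" by blast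
  have s: "M 1 0 \<in> {M 0 0, M 0 1, M 0 2}" "M 1 1 \<in> {M 0 0, M 0 1, M 0 2}" "M 1 2 \<in> {M 0 0, M 0 1, M 0 2}"
          "M 2 0 \<in> {M 0 0, M 0 1, M 0 2}" "M 2 1 \<in> {M 0 0, M 0 1, M 0 2}" "M 2 2 \<in> {M 0 0, M 0 1, M 0 2}"
    using inS by auto
  have "M 1 0 = M 0 1 \<or> M 1 0 = M 0 2" using s(1) neq by auto
  hence "(M 1 0 = M 0 1 \<and> M 1 1 = M 0 2 \<and> M 1 2 = M 0 0 \<and> M 2 0 = M 0 2 \<and> M 2 1 = M 0 0 \<and> M 2 2 = M 0 1) \<or>
        (M 1 0 = M 0 2 \<and> M 1 1 = M 0 0 \<and> M 1 2 = M 0 1 \<and> M 2 0 = M 0 1 \<and> M 2 1 = M 0 2 \<and> M 2 2 = M 0 0)"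
  proof
    assume h10: "M 1 0 = M 0 1"
    have h12: "M 1 2 = M 0 0" using s(3) neq h10 by auto
    have h11: "M 1 1 = M 0 2" using s(2) neq h10 h12 by auto
    have h20: "M 2 0 = M 0 2" using s(4) neq h10 by auto
    have h21: "M 2 1 = M 0 0" using s(5) neq h11 by auto
    have h22: "M 2 2 = M 0 1" using s(6) neq h12 by auto
    show ?thesis using h10 h11 h12 h20 h21 h22 by blast
  next
    assume h10: "M 1 0 = M 0 2"
    have h11: "M 1 1 = M 0 0" using s(2) neq h10 by auto
    have h12: "M 1 2 = M 0 1" using s(3) neq h10 h11 by auto
    have h20: "M 2 0 = M 0 1" using s(4) neq h10 by auto
    have h21: "M 2 1 = M 0 2" using s(5) neq h11 by auto
    have h22: "M 2 2 = M 0 0" using s(6) neq h12 by auto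
    show ?thesis using h10 h11 h12 h20 h21 h22 by blast
  qed
  thus ?thesis
  proof
    assume h: "M 1 0 = M 0 1 \<and> M 1 1 = M 0 2 \<and> M 1 2 = M 0 0 \<and> M 2 0 = M 0 2 \<and> M 2 1 = M 0 0 \<and> M 2 2 = M 0 1"
    have "\<forall>i<3. \<forall>j<3. M i j = M 0 ((i+j) mod 3)" unfolding less3 using h by (auto simp: numeral_2_eq_2)
    thus ?thesis ..
  next
    assume h: "M 1 0 = M 0 2 \<and> M 1 1 = M 0 0 \<and> M 1 2 = M 0 1 \<and> M 2 0 = M 0 1 \<and> M 2 1 = M 0 2 \<and> M 2 2 = M 0 0"
    have "\<forall>i<3. \<forall>j<3. M i j = M 0 ((j + 2*i) mod 3)" unfolding less3 using h by (auto simp: numeral_2_eq_2)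
    thus ?thesis ..
  qed
qed

lemma enum3:
  assumes "card (X::'a set) = 3"
  shows "\<exists>r::nat \<Rightarrow> 'a. inj_on r {..<3} \<and> r ` {..<3} = X"
proof -
  have "finite X" using assms by (metis card.infinite zero_neq_numeral)
  then obtain xs where xs: "distinct xs" "set xs = X" using finite_distinct_list by blast
  hence len: "length xs = 3" using assms distinct_card by fastforce
  have "inj_on (\<lambda>n. xs ! n) {..<3}" using xs(1) len by (simp add: inj_on_nth)
  moreover have "(\<lambda>n. xs ! n) ` {..<3} = set xs" using len by (auto simp: in_set_conv_nth)
  hence "(\<lambda>n. xs ! n) ` {..<3} = X" using xs(2) by simp
  ultimately show ?thesis by blast
qed

definition sw :: "nat \<Rightarrow> nat" where "sw n = (if n = 1 then 2 else if n = 2 then 1 else n)"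

lemma sw_simps [simp]: "sw 0 = 0" "sw 1 = 2" "sw 2 = 1" by (auto simp: sw_def)

lemma sw_image: "sw ` {..<3} = {..<3}"
  unfolding lessThan_def by (auto simp: sw_def image_def less3)

lemma sw_inj: "inj_on sw {..<3}"
  unfolding inj_on_def by (auto simp: sw_def)

lemma inj_sw_comp: "inj_on r {..<3} \<Longrightarrow> inj_on (r \<circ> sw) {..<3}"
  using sw_inj sw_image comp_inj_on by (metis)

lemma img_sw_comp: "(r \<circ> sw) ` {..<3} = r ` {..<3}"
  by (metis image_comp sw_image)

lemma img3: "r ` {..<(3::nat)} = {r 0, r 1, r 2}"
  by (auto simp: image_def less3)

context sqsetting
begin

lemma normA:
  fixes r c :: "nat \<Rightarrow> 6"
  assumes r: "inj_on r {..<3}" "r ` {..<3} = R" and c: "inj_on c {..<3}" "c ` {..<3} = C"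
  shows "\<exists>r'. inj_on r' {..<3} \<and> r' ` {..<3} = R \<and> (\<forall>i<3. \<forall>j<3. L (r' i) (c j) = L (r' 0) (c ((i+j) mod 3)))"
proof -
  define M where "M i j = L (r i) (c j)" for i j
  have r0: "r 0 \<in> R" using r(2) by auto
  have SS: "S = {M 0 0, M 0 1, M 0 2}"
    using row_image[OF r0] c(2) unfolding M_def img3 by auto
  have inS: "M i j \<in> {M 0 0, M 0 1, M 0 2}" if "i<3" "j<3" for i j
  proof -
    have "L (r i) (c j) \<in> S" using L_RC[of "r i" "c j"] that r(2) c(2) by auto
    thus ?thesis using SS unfolding M_def by simp
  qed
  have rowinj: "j = j'" if "i<3" "j<3" "j'<3" "M i j = M i j'" for i j j'
    using inj_row[of "r i" "c j" "c j'"] c(1) that unfolding M_def inj_on_def by auto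
  have colinj: "i = i'" if "i<3" "i'<3" "j<3" "M i j = M i' j" for i i' j
    using inj_col[of "r i" "c j" "r i'"] r(1) that unfolding M_def inj_on_def by auto
  from latin3[of M, OF inS rowinj colinj] show ?thesis
  proof
    assume h: "\<forall>i<3. \<forall>j<3. M i j = M 0 ((i+j) mod 3)"
    thus ?thesis using r unfolding M_def by blast
  next
    assume h: "\<forall>i<3. \<forall>j<3. M i j = M 0 ((j + 2*i) mod 3)"
    have "\<forall>i<3. \<forall>j<3. L ((r \<circ> sw) i) (c j) = L ((r \<circ> sw) 0) (c ((i+j) mod 3))"
      unfolding less3 using h[rule_format, of 0 0] h[rule_format, of 0 1] h[rule_format, of 0 2] h[rule_format, of 1 0] h[rule_format, of 1 1] h[rule_format, of 1 2] h[rule_format, of 2 0] h[rule_format, of 2 1] h[rule_format, of 2 2] unfolding M_def by (auto simp: sw_def numeral_2_eq_2)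
    thus ?thesis using inj_sw_comp[OF r(1)] img_sw_comp[of r] r(2) by metis
  qed
qed

lemma normB:
  fixes r c :: "nat \<Rightarrow> 6"
  assumes r: "inj_on r {..<3}" "r ` {..<3} = R" and c: "inj_on c {..<3}" "c ` {..<3} = - C"
  shows "\<exists>c'. inj_on c' {..<3} \<and> c' ` {..<3} = - C \<and> (\<forall>i<3. \<forall>j<3. L (r i) (c' j) = L (r 0) (c' ((i+j) mod 3)))"
proof -
  define M where "M i j = L (r i) (c j)" for i j
  have r0: "r 0 \<in> R" using r(2) by auto
  have SS: "- S = {M 0 0, M 0 1, M 0 2}"
  proof -
    have "- S = (\<lambda>j. L (r 0) j) ` (c ` {..<3})" using row_image_nC[OF r0] c(2) by simp
    also have "\<dots> = {M 0 0, M 0 1, M 0 2}" unfolding img3 M_def by simp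
    finally show ?thesis .
  qed
  have inS: "M i j \<in> {M 0 0, M 0 1, M 0 2}" if "i<3" "j<3" for i j
  proof -
    have "L (r i) (c j) \<in> - S" using L_RnC[of "r i" "c j"] that r(2) c(2) by auto
    thus ?thesis using SS unfolding M_def by simp
  qed
  have rowinj: "j = j'" if "i<3" "j<3" "j'<3" "M i j = M i j'" for i j j'
    using inj_row[of "r i" "c j" "c j'"] c(1) that unfolding M_def inj_on_def by auto
  have colinj: "i = i'" if "i<3" "i'<3" "j<3" "M i j = M i' j" for i i' j
    using inj_col[of "r i" "c j" "r i'"] r(1) that unfolding M_def inj_on_def by auto
  from latin3[of M, OF inS rowinj colinj] show ?thesis
  proof
    assume h: "\<forall>i<3. \<forall>j<3. M i j = M 0 ((i+j) mod 3)"
    thus ?thesis using c unfolding M_def by blast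
  next
    assume h: "\<forall>i<3. \<forall>j<3. M i j = M 0 ((j + 2*i) mod 3)"
    have "\<forall>i<3. \<forall>j<3. L (r i) ((c \<circ> sw) j) = L (r 0) ((c \<circ> sw) ((i+j) mod 3))"
      unfolding less3 using h[rule_format, of 0 0] h[rule_format, of 0 1] h[rule_format, of 0 2] h[rule_format, of 1 0] h[rule_format, of 1 1] h[rule_format, of 1 2] h[rule_format, of 2 0] h[rule_format, of 2 1] h[rule_format, of 2 2] unfolding M_def by (auto simp: sw_def numeral_2_eq_2)
    thus ?thesis using inj_sw_comp[OF c(1)] img_sw_comp[of c] c(2) by metis
  qed
qed

end

lemma arith3:
  fixes i i' j j' :: nat
  assumes "i<3" "i'<3" "j<3" "j'<3" "i \<noteq> i'" "j \<noteq> j'" "(j+3-i) mod 3 \<noteq> (j'+3-i') mod 3"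
  shows "(i+j) mod 3 = (i'+j') mod 3"
  using assms unfolding less3 by auto

lemma arith_k: "a < 3 \<Longrightarrow> k < 3 \<Longrightarrow> ((k+a) mod 3 + 3 - a) mod 3 = (k::nat)"
  unfolding less3 by auto

lemma arith_k2: "i < 3 \<Longrightarrow> j < 3 \<Longrightarrow> k < 3 \<Longrightarrow> j \<noteq> (k+i) mod 3 \<Longrightarrow> (j + 3 - i) mod 3 \<noteq> (k::nat)"
  unfolding less3 by auto

lemma sum_single3:
  fixes g :: "nat \<Rightarrow> complex"
  assumes "j0 < 3" "\<And>j. j < 3 \<Longrightarrow> j \<noteq> j0 \<Longrightarrow> g j = 0"
  shows "(\<Sum>j<3. g j) = g j0"
proof -
  have "(\<Sum>j<3. g j) = (\<Sum>j<3. if j = j0 then g j0 else 0)"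
    using assms(2) by (intro sum.cong) auto
  also have "\<dots> = g j0" using assms(1) by (simp add: sum.delta)
  finally show ?thesis .
qed

context sqsetting
begin

lemma blk_orth:
  fixes r cx :: "nat \<Rightarrow> 6"
  assumes r: "inj_on r {..<3}" and cx: "inj_on cx {..<3}"
  and H: "\<forall>i<3. \<forall>j<3. L (r i) (cx j) = L (r 0) (cx ((i+j) mod 3))"
  and ij: "i<3" "i'<3" "j<3" "j'<3" and ne: "(j+3-i) mod 3 \<noteq> (j'+3-i') mod 3"
  shows "cinner (Phi (r i) (cx j)) (Phi (r i') (cx j')) = 0"
proof (cases "i = i'")
  case True
  hence "j \<noteq> j'" using ne by auto
  hence "cx j \<noteq> cx j'" using cx ij unfolding inj_on_def by auto
  thus ?thesis using True row_orth by simp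
next
  case False
  hence rne: "r i \<noteq> r i'" using r ij unfolding inj_on_def by auto
  show ?thesis
  proof (cases "j = j'")
    case True
    thus ?thesis using rne col_orth by simp
  next
    case False
    have "(i+j) mod 3 = (i'+j') mod 3" using arith3 ij \<open>i \<noteq> i'\<close> False ne by blast
    hence "L (r i) (cx j) = L (r i') (cx j')" using H[rule_format, of i j] H[rule_format, of i' j'] ij by metis
    thus ?thesis using sym_orth rne by simp
  qed
qed

lemma blk_frame:
  fixes r cx :: "nat \<Rightarrow> 6"
  assumes r: "inj_on r {..<3}" "r ` {..<3} = R" and cx: "inj_on cx {..<3}" "cx ` {..<3} = C \<or> cx ` {..<3} = - C"
  shows "(\<Sum>i<3. \<Sum>j<3. cinner u (Phi (r i) (cx j)) * cinner (Phi (r i) (cx j)) v) = 3/2 * cinner u v"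
proof -
  have "(\<Sum>i<3. \<Sum>j<3. cinner u (Phi (r i) (cx j)) * cinner (Phi (r i) (cx j)) v)
      = (\<Sum>i\<in>R. \<Sum>j\<in>cx ` {..<3}. cinner u (Phi i j) * cinner (Phi i j) v)"
    unfolding r(2)[symmetric] by (simp add: sum.reindex r(1) cx(1))
  thus ?thesis using cx(2) frames by auto
qed

lemma blk_trine:
  fixes r cx :: "nat \<Rightarrow> 6"
  assumes r: "inj_on r {..<3}" "r ` {..<3} = R" and cx: "inj_on cx {..<3}" "cx ` {..<3} = C \<or> cx ` {..<3} = - C"
  and H: "\<forall>i<3. \<forall>j<3. L (r i) (cx j) = L (r 0) (cx ((i+j) mod 3))"
  and k: "k < 3"
  defines "x0 \<equiv> Phi (r 0) (cx k)" and "x1 \<equiv> Phi (r 1) (cx ((k+1) mod 3))" and "x2 \<equiv> Phi (r 2) (cx ((k+2) mod 3))"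
  shows "cnj (-2 * cinner x1 x0) * (-2 * cinner x1 x0) = 1"
    and "cnj (-2 * cinner x2 x0) * (-2 * cinner x2 x0) = 1"
    and "(\<lambda>y. x0 y + (-2 * cinner x1 x0) * x1 y + (-2 * cinner x2 x0) * x2 y) = (\<lambda>y. 0)"
    and "cinner x0 (\<lambda>y. (-2 * cinner x1 x0) * x1 y) = -1/2"
proof -
  define P where "P i j = Phi (r i) (cx j)" for i j
  have xs: "x0 = P 0 ((k+0) mod 3)" "x1 = P 1 ((k+1) mod 3)" "x2 = P 2 ((k+2) mod 3)"
    unfolding x0_def x1_def x2_def P_def using k by auto
  have red: "(\<Sum>i<3. \<Sum>j<3. cinner (P a ((k+a) mod 3)) (P i j) * cinner (P i j) v)
     = (\<Sum>i<3. cinner (P a ((k+a) mod 3)) (P i ((k+i) mod 3)) * cinner (P i ((k+i) mod 3)) v)"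
    if a: "a < 3" for a v
  proof (rule sum.cong[OF refl])
    fix i assume "i \<in> {..<(3::nat)}"
    hence i: "i < 3" by simp
    show "(\<Sum>j<3. cinner (P a ((k+a) mod 3)) (P i j) * cinner (P i j) v) =
          cinner (P a ((k+a) mod 3)) (P i ((k+i) mod 3)) * cinner (P i ((k+i) mod 3)) v"
    proof (rule sum_single3)
      show "(k+i) mod 3 < 3" by simp
      fix j assume j: "j < 3" "j \<noteq> (k+i) mod 3"
      have "((k+a) mod 3 + 3 - a) mod 3 \<noteq> (j + 3 - i) mod 3"
        using arith_k[OF a k] arith_k2[OF i j(1) k j(2)] by simp
      hence "cinner (P a ((k+a) mod 3)) (P i j) = 0"
        unfolding P_def using blk_orth[OF r(1) cx(1) H] a i j(1) by simp
      thus "cinner (P a ((k+a) mod 3)) (P i j) * cinner (P i j) v = 0" by simp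
    qed
  qed
  have F3: "cinner u x0 * cinner x0 v + cinner u x1 * cinner x1 v + cinner u x2 * cinner x2 v = 3/2 * cinner u v"
    if u: "u \<in> {x0,x1,x2}" for u v
  proof -
    have "\<exists>a. a < 3 \<and> u = P a ((k+a) mod 3)"
    proof -
      have "u = x0 \<or> u = x1 \<or> u = x2" using u by auto
      thus ?thesis
      proof (elim disjE)
        assume "u = x0" thus ?thesis using xs(1) by (intro exI[of _ 0]) simp
      next
        assume "u = x1" thus ?thesis using xs(2) by (intro exI[of _ 1]) simp
      next
        assume "u = x2" thus ?thesis using xs(3) by (intro exI[of _ 2]) simp
      qed
    qed
    then obtain a where a: "a < 3" "u = P a ((k+a) mod 3)" by blast
    have "3/2 * cinner u v = (\<Sum>i<3. \<Sum>j<3. cinner u (P i j) * cinner (P i j) v)"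
      unfolding P_def using blk_frame[OF r cx] by simp
    also have "\<dots> = (\<Sum>i<3. cinner u (P i ((k+i) mod 3)) * cinner (P i ((k+i) mod 3)) v)"
      unfolding a(2) by (rule red[OF a(1)])
    also have "\<dots> = cinner u x0 * cinner x0 v + cinner u x1 * cinner x1 v + cinner u x2 * cinner x2 v"
      unfolding sum3 xs by simp
    finally show ?thesis by simp
  qed
  have n: "cinner x0 x0 = 1" "cinner x1 x1 = 1" "cinner x2 x2 = 1" unfolding x0_def x1_def x2_def by (simp_all add: unit)
  note T = trine[OF n, OF F3]
  show "cnj (-2 * cinner x1 x0) * (-2 * cinner x1 x0) = 1" by (rule T(1))
  show "cnj (-2 * cinner x2 x0) * (-2 * cinner x2 x0) = 1" by (rule T(2))
  show "(\<lambda>y. x0 y + (-2 * cinner x1 x0) * x1 y + (-2 * cinner x2 x0) * x2 y) = (\<lambda>y. 0)" by (rule T(3))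
  show "cinner x0 (\<lambda>y. (-2 * cinner x1 x0) * x1 y) = -1/2" by (rule T(4))
qed

end

lemma arith_p1: "m < 3 \<Longrightarrow> ((m+2) mod 3 + 1) mod 3 = (m::nat)" unfolding less3 by auto
lemma arith_p2: "m < 3 \<Longrightarrow> ((m+1) mod 3 + 2) mod 3 = (m::nat)" unfolding less3 by auto
lemma arith_ne1: "m < 3 \<Longrightarrow> m' < 3 \<Longrightarrow> m \<noteq> m' \<Longrightarrow> (m+1) mod 3 \<noteq> ((m'::nat)+1) mod 3" unfolding less3 by auto

lemma cinner_zero_left: "cinner (\<lambda>x. 0) v = 0" unfolding cinner_def by simp

context sqsetting
begin

lemma contradiction: False
proof -
  obtain r0 :: "nat \<Rightarrow> 6" where r0: "inj_on r0 {..<3}" "r0 ` {..<3} = R" using enum3[OF cR] by blast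
  obtain c :: "nat \<Rightarrow> 6" where c: "inj_on c {..<3}" "c ` {..<3} = C" using enum3[OF cC] by blast
  obtain cb :: "nat \<Rightarrow> 6" where cb: "inj_on cb {..<3}" "cb ` {..<3} = - C" using enum3[OF cnC] by blast
  obtain r where r: "inj_on r {..<3}" "r ` {..<3} = R"
    and HA: "\<forall>i<3. \<forall>j<3. L (r i) (c j) = L (r 0) (c ((i+j) mod 3))"
    using normA[OF r0 c] by blast
  obtain c' where c': "inj_on c' {..<3}" "c' ` {..<3} = - C"
    and HB: "\<forall>i<3. \<forall>j<3. L (r i) (c' j) = L (r 0) (c' ((i+j) mod 3))"
    using normB[OF r cb] by blast
  have cC1: "c ` {..<3} = C \<or> c ` {..<3} = - C" using c by simp
  have cC2: "c' ` {..<3} = C \<or> c' ` {..<3} = - C" using c' by simp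
  have rR: "r i \<in> R" if "i < 3" for i using r(2) that by auto
  have cinC: "c k \<in> C" if "k < 3" for k using c(2) that by auto
  have c'nC: "c' k \<notin> C" if "k < 3" for k using c'(2) that by auto
  define f where "f k = Phi (r 0) (c k)" for k
  define g where "g m = Phi (r 0) (c' m)" for m
  define xa1 where "xa1 k = Phi (r 1) (c ((k+1) mod 3))" for k
  define xa2 where "xa2 k = Phi (r 2) (c ((k+2) mod 3))" for k
  define xb1 where "xb1 m = Phi (r 1) (c' ((m+1) mod 3))" for m
  define xb2 where "xb2 m = Phi (r 2) (c' ((m+2) mod 3))" for m
  define za1 where "za1 k = -2 * cinner (xa1 k) (f k)" for k
  define za2 where "za2 k = -2 * cinner (xa2 k) (f k)" for k
  define zb1 where "zb1 m = -2 * cinner (xb1 m) (g m)" for m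
  define zb2 where "zb2 m = -2 * cinner (xb2 m) (g m)" for m
  define a1 where "a1 k = (\<lambda>y. za1 k * xa1 k y)" for k
  define a2 where "a2 k = (\<lambda>y. za2 k * xa2 k y)" for k
  define b1 where "b1 m = (\<lambda>y. zb1 m * xb1 m y)" for m
  define b2 where "b2 m = (\<lambda>y. zb2 m * xb2 m y)" for m
  note TA = blk_trine[OF r c(1) cC1 HA]
  note TB = blk_trine[OF r c'(1) cC2 HB]
  have zb1u: "cnj (zb1 m) * zb1 m = 1" if "m < 3" for m
    using TB(1)[OF that] unfolding zb1_def xb1_def g_def .
  have pars: "cinner u v = (\<Sum>k<3. cinner u (f k) * cinner (f k) v) + (\<Sum>m<3. cinner u (g m) * cinner (g m) v)" for u v
  proof -
    have "cinner u v = (\<Sum>j\<in>UNIV. cinner u (Phi (r 0) j) * cinner (Phi (r 0) j) v)" by (rule row_pars)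
    also have "\<dots> = (\<Sum>j\<in>C. cinner u (Phi (r 0) j) * cinner (Phi (r 0) j) v) + (\<Sum>j\<in>-C. cinner u (Phi (r 0) j) * cinner (Phi (r 0) j) v)"
      by (rule split_sum)
    also have "(\<Sum>j\<in>C. cinner u (Phi (r 0) j) * cinner (Phi (r 0) j) v) = (\<Sum>k<3. cinner u (f k) * cinner (f k) v)"
      unfolding c(2)[symmetric] f_def by (simp add: sum.reindex c(1))
    also have "(\<Sum>j\<in>-C. cinner u (Phi (r 0) j) * cinner (Phi (r 0) j) v) = (\<Sum>m<3. cinner u (g m) * cinner (g m) v)"
      unfolding c'(2)[symmetric] g_def by (simp add: sum.reindex c'(1))
    finally show ?thesis .
  qed
  have fa: "cinner (f k') (a1 k) = (if k' = k then -1/2 else 0)" if k: "k<3" "k'<3" for k k'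
  proof (cases "k' = k")
    case True
    thus ?thesis using TA(4)[OF k(1)] unfolding a1_def za1_def xa1_def f_def by simp
  next
    case False
    have "(k' + 3 - 0) mod 3 \<noteq> ((k+1) mod 3 + 3 - 1) mod 3" using arith_k[of 1 k] k False by simp
    hence "cinner (f k') (xa1 k) = 0" unfolding f_def xa1_def using blk_orth[OF r(1) c(1) HA, of 0 1 k' "(k+1) mod 3"] k by simp
    thus ?thesis using False unfolding a1_def cinner_scale_right by simp
  qed
  have a2: "a2 k = (\<lambda>y. - f k y - a1 k y)" if k: "k<3" for k
  proof (rule ext)
    fix y
    have "f k y + za1 k * xa1 k y + za2 k * xa2 k y = 0"
      using fun_cong[OF TA(3)[OF k], of y] unfolding za1_def za2_def xa1_def xa2_def f_def by simp
    thus "a2 k y = - f k y - a1 k y" unfolding a1_def a2_def by algebra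
  qed
  have gb: "cinner (g m') (b1 m) = (if m' = m then -1/2 else 0)" if k: "m<3" "m'<3" for m m'
  proof (cases "m' = m")
    case True
    thus ?thesis using TB(4)[OF k(1)] unfolding b1_def zb1_def xb1_def g_def by simp
  next
    case False
    have "(m' + 3 - 0) mod 3 \<noteq> ((m+1) mod 3 + 3 - 1) mod 3" using arith_k[of 1 m] k False by simp
    hence "cinner (g m') (xb1 m) = 0" unfolding g_def xb1_def using blk_orth[OF r(1) c'(1) HB, of 0 1 m' "(m+1) mod 3"] k by simp
    thus ?thesis using False unfolding b1_def cinner_scale_right by simp
  qed
  have b2: "b2 m = (\<lambda>y. - g m y - b1 m y)" if k: "m<3" for m
  proof (rule ext)
    fix y
    have "g m y + zb1 m * xb1 m y + zb2 m * xb2 m y = 0"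
      using fun_cong[OF TB(3)[OF k], of y] unfolding zb1_def zb2_def xb1_def xb2_def g_def by simp
    thus "b2 m y = - g m y - b1 m y" unfolding b1_def b2_def by algebra
  qed
  have bb: "cinner (b1 m) (b1 m') = (if m = m' then 1 else 0)" if k: "m<3" "m'<3" for m m'
  proof -
    have "cinner (b1 m) (b1 m') = cnj (zb1 m) * zb1 m' * cinner (xb1 m) (xb1 m')"
      unfolding b1_def cinner_scale_left cinner_scale_right by simp
    moreover have "cinner (xb1 m) (xb1 m') = 0" if "m \<noteq> m'"
    proof -
      have "c' ((m+1) mod 3) \<noteq> c' ((m'+1) mod 3)"
        using c'(1) arith_ne1[OF k that] unfolding inj_on_def by auto
      thus ?thesis unfolding xb1_def by (rule row_orth)
    qed
    ultimately show ?thesis using zb1u[OF k(1)] unit unfolding xb1_def by auto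
  qed
  have ab: "cinner (a1 k) (b1 m) = 0" if k: "k<3" "m<3" for k m
  proof -
    have "c ((k+1) mod 3) \<noteq> c' ((m+1) mod 3)" using cinC c'nC by (metis mod_less_divisor zero_less_numeral)
    hence "cinner (xa1 k) (xb1 m) = 0" unfolding xa1_def xb1_def by (rule row_orth)
    thus ?thesis unfolding a1_def b1_def cinner_scale_left cinner_scale_right by simp
  qed
  define rr where "rr j = (SOME i. L i (c' j) = L (r 0) (c 0))" for j
  have rrL: "L (rr j) (c' j) = L (r 0) (c 0)" for j
    unfolding rr_def by (rule someI_ex) (rule surj_col)
  have rrR: "rr j \<notin> R" if j: "j < 3" for j
  proof
    assume "rr j \<in> R"
    hence "L (rr j) (c' j) \<notin> S" using L_RnC c'nC[OF j] by blast
    moreover have "L (r 0) (c 0) \<in> S" using L_RC rR cinC by simp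
    ultimately show False using rrL by simp
  qed
  have rne: "r i \<noteq> rr j" if "i < 3" "j < 3" for i j using rR[OF that(1)] rrR[OF that(2)] by auto
  define d where "d j = Phi (rr j) (c' j)" for j
  have dn: "d j \<noteq> (\<lambda>x. 0)" if "j < 3" for j
  proof
    assume "d j = (\<lambda>x. 0)"
    hence "cinner (d j) (d j) = 0" by (simp add: cinner_zero_left)
    thus False unfolding d_def unit by simp
  qed
  have d1: "cinner (f 0) (d j) = 0" if j: "j < 3" for j
    unfolding f_def d_def by (rule sym_orth) (use rne[OF _ j, of 0] rrL in auto)
  have d2: "cinner (a1 1) (d j) = 0" if j: "j < 3" for j
  proof -
    have "L (r 1) (c 2) = L (r 0) (c 0)" using HA[rule_format, of 1 2] by simp
    moreover have e: "xa1 1 = Phi (r 1) (c 2)" unfolding xa1_def by (simp add: numeral_2_eq_2)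
    ultimately have "cinner (xa1 1) (d j) = 0" unfolding e d_def
      by (intro sym_orth) (use rne[OF _ j, of 1] rrL in auto)
    thus ?thesis unfolding a1_def cinner_scale_left by simp
  qed
  have d3: "cinner (a2 2) (d j) = 0" if j: "j < 3" for j
  proof -
    have "L (r 2) (c 1) = L (r 0) (c 0)" using HA[rule_format, of 2 1] by simp
    moreover have e: "xa2 2 = Phi (r 2) (c 1)" unfolding xa2_def by (simp add: numeral_2_eq_2)
    ultimately have "cinner (xa2 2) (d j) = 0" unfolding e d_def
      by (intro sym_orth) (use rne[OF _ j, of 2] rrL in auto)
    thus ?thesis unfolding a2_def cinner_scale_left by simp
  qed
  have d4: "cinner (g j) (d j) = 0" if j: "j < 3" for j
    unfolding g_def d_def by (rule col_orth) (use rne[OF _ j, of 0] in auto)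
  have d5: "cinner (b1 ((j+2) mod 3)) (d j) = 0" if j: "j < 3" for j
  proof -
    have "cinner (xb1 ((j+2) mod 3)) (d j) = 0" unfolding xb1_def d_def arith_p1[OF j]
      by (rule col_orth) (use rne[OF _ j, of 1] in auto)
    thus ?thesis unfolding b1_def cinner_scale_left by simp
  qed
  have d6: "cinner (b2 ((j+1) mod 3)) (d j) = 0" if j: "j < 3" for j
  proof -
    have "cinner (xb2 ((j+1) mod 3)) (d j) = 0" unfolding xb2_def d_def arith_p2[OF j]
      by (rule col_orth) (use rne[OF _ j, of 2] in auto)
    thus ?thesis unfolding b2_def cinner_scale_left by simp
  qed
  show False
    by (rule vector_core[OF pars fa a2 gb b2 bb ab dn d1 d2 d3 d4 d5 d6])
qed

end

theorem mainTheorem15: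
  shows "\<not> (\<exists>(Psi :: 6 \<Rightarrow> 6 \<Rightarrow> 6 \<Rightarrow> complex) Phi L.
           is_QLS Psi \<and> is_QLS Phi \<and> orthogonal_QLS Psi Phi \<and>
           classical_with Psi L \<and> has_subsquare3 L)"
proof
  assume "\<exists>(Psi :: 6 \<Rightarrow> 6 \<Rightarrow> 6 \<Rightarrow> complex) Phi L.
           is_QLS Psi \<and> is_QLS Phi \<and> orthogonal_QLS Psi Phi \<and>
           classical_with Psi L \<and> has_subsquare3 L"
  then obtain Psi Phi :: "6 \<Rightarrow> 6 \<Rightarrow> 6 \<Rightarrow> complex" and L where
    h: "is_QLS Psi" "is_QLS Phi" "orthogonal_QLS Psi Phi" "classical_with Psi L" "has_subsquare3 L"
    by blast
  from h(4) have lat: "latin_square L" and "\<exists>e. is_onb UNIV e \<and> (\<forall>i j. \<exists>c. Psi i j = (\<lambda>k. c * e (L i j) k))"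
    unfolding classical_with_def by auto
  then obtain e where e: "is_onb UNIV e" and ex: "\<forall>i j. \<exists>c. Psi i j = (\<lambda>k. c * e (L i j) k)" by blast
  from ex obtain cc where cc: "\<forall>i j. Psi i j = (\<lambda>k. cc i j * e (L i j) k)" by metis
  from h(5) obtain R C where RC: "card R = 3" "card C = 3" "card {L i j | i j. i \<in> R \<and> j \<in> C} = 3"
    unfolding has_subsquare3_def by blast
  interpret sqsetting Psi Phi L e cc R C
    using h(1,2,3) lat e cc RC by unfold_locales auto
  show False by (rule contradiction)
qed


end
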